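(* Let $S$ be an $a$-cap free and $b$-cup free configuration with a fixed slope labeling $s$, and let $\alpha_i(p)$ ($p \in S$, $1 \le i \le a-2$) be its $\alpha$-statistic. Then: (1) for every point $p$, $1 \leq \alpha_1(p) \leq \alpha_2(p) \leq \cdots \leq \alpha_{a-2}(p) \leq b-1$; consequently $\alpha = (\alpha_1,\dots,\alpha_{a-2})$ is a map from $S$ to $T_{a,b} = \{(x_1,\dots,x_{a-2}) \in \mathbb{N}^{a-2} : 1 \le x_1 \le \cdots \le x_{a-2} \le b-1\}$; (2) for any two points $x<y$ of $S$ such that $s(xy)=i$, we have $\alpha_i(x) < \alpha_i(y)$; in particular the map $\alpha$ is injective.
   Context: A configuration is a finite set $S$ of points with a linear order $<$ and, for every $3$-element subset, an arbitrary assignment declaring it either a cap or a cup. Points $x_1<\cdots<x_a$ form an $a$-cup (resp. $a$-cap) if every consecutive triple $\{x_{i-1},x_i,x_{i+1}\}$, $1<i<a$, is assigned cup (resp. cap); $1$- and $2$-element sets are both caps and cups. The length (size) of a cup is its number of points; a cup $x_1\cdots x_a$ with $a\ge2$ ends with the point $x_a$ and the edge $x_{a-1}x_a$. $S$ is $a$-cap free (resp. $b$-cup free) if it contains no $a$-cap (resp. $b$-cup). An edge is a pair $x<y$, written $xy$. A slope labeling of an $a$-cap free configuration $S$ is an assignment of an integer $s(xy)\in\{1,\dots,a-2\}$ to every edge such that for any $x<y<z$, $s(xy)\le s(yz)$ implies $\{x,y,z\}$ is a $3$-cup. The $\alpha$-statistic: for $p \in S$ and $1\le i\le a-2$, $\alpha_i(p)$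 is the maximum length of a cup that ends with the point $p$ and with an edge of label $\le i$; if there is no such cup, $\alpha_i(p)=1$. *)

theory Defs
  imports Main
begin

text \<open>A configuration: a finite set S of points of a linearly ordered type, together with
  a predicate cup on triples; for x < y < z the triple {x,y,z} is a cup iff cup x y z,
  and a cap otherwise (an arbitrary assignment).\<close>

definition is_cup :: "'a::linorder set \<Rightarrow> ('a \<Rightarrow> 'a \<Rightarrow> 'a \<Rightarrow> bool) \<Rightarrow> 'a list \<Rightarrow> bool" where
  "is_cup S cup xs \<longleftrightarrow> sorted_wrt (<) xs \<and> set xs \<subseteq> S \<and>
     (\<forall>k. k + 2 < length xs \<longrightarrow> cup (xs ! k) (xs ! (k+1)) (xs ! (k+2)))"

definition is_cap :: "'a::linorder set \<Rightarrow> ('a \<Rightarrow> 'a \<Rightarrow> 'a \<Rightarrow> bool) \<Rightarrow> 'a list \<Rightarrow> bool" where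
  "is_cap S cup xs \<longleftrightarrow> sorted_wrt (<) xs \<and> set xs \<subseteq> S \<and>
     (\<forall>k. k + 2 < length xs \<longrightarrow> \<not> cup (xs ! k) (xs ! (k+1)) (xs ! (k+2)))"

definition cap_free :: "'a::linorder set \<Rightarrow> ('a \<Rightarrow> 'a \<Rightarrow> 'a \<Rightarrow> bool) \<Rightarrow> nat \<Rightarrow> bool" where
  "cap_free S cup a \<longleftrightarrow> \<not> (\<exists>xs. is_cap S cup xs \<and> length xs = a)"

definition cup_free :: "'a::linorder set \<Rightarrow> ('a \<Rightarrow> 'a \<Rightarrow> 'a \<Rightarrow> bool) \<Rightarrow> nat \<Rightarrow> bool" where
  "cup_free S cup b \<longleftrightarrow> \<not> (\<exists>xs. is_cup S cup xs \<and> length xs = b)"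

definition slope_labeling ::
  "'a::linorder set \<Rightarrow> ('a \<Rightarrow> 'a \<Rightarrow> 'a \<Rightarrow> bool) \<Rightarrow> nat \<Rightarrow> ('a \<Rightarrow> 'a \<Rightarrow> nat) \<Rightarrow> bool" where
  "slope_labeling S cup a s \<longleftrightarrow>
     (\<forall>x\<in>S. \<forall>y\<in>S. x < y \<longrightarrow> 1 \<le> s x y \<and> s x y \<le> a - 2) \<and>
     (\<forall>x\<in>S. \<forall>y\<in>S. \<forall>z\<in>S. x < y \<and> y < z \<and> s x y \<le> s y z \<longrightarrow> cup x y z)"

definition alpha ::
  "'a::linorder set \<Rightarrow> ('a \<Rightarrow> 'a \<Rightarrow> 'a \<Rightarrow> bool) \<Rightarrow> ('a \<Rightarrow> 'a \<Rightarrow> nat) \<Rightarrow> nat \<Rightarrow> 'a \<Rightarrow> nat" where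
  "alpha S cup s i p = Max ({length xs | xs. is_cup S cup xs \<and> length xs \<ge> 2 \<and> last xs = p \<and>
        s (xs ! (length xs - 2)) p \<le> i} \<union> {1})"

definition T_set :: "nat \<Rightarrow> nat \<Rightarrow> nat list set" where
  "T_set a b = {xs. length xs = a - 2 \<and> sorted xs \<and> (\<forall>x\<in>set xs. 1 \<le> x \<and> x \<le> b - 1)}"

definition alpha_vec ::
  "'a::linorder set \<Rightarrow> ('a \<Rightarrow> 'a \<Rightarrow> 'a \<Rightarrow> bool) \<Rightarrow> ('a \<Rightarrow> 'a \<Rightarrow> nat) \<Rightarrow> nat \<Rightarrow> 'a \<Rightarrow> nat list" where
  "alpha_vec S cup s a p = map (\<lambda>i. alpha S cup s i p) [1..<a - 1]"

end

theory Submission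
  imports Defs
begin

lemma cup_len_le:
  assumes "finite S" "is_cup S cup xs"
  shows "length xs \<le> card S"
proof -
  have "distinct xs" using assms(2) unfolding is_cup_def
    by (simp add: strict_sorted_iff)
  then have "length xs = card (set xs)" by (simp add: distinct_card)
  also have "\<dots> \<le> card S" using assms unfolding is_cup_def by (simp add: card_mono)
  finally show ?thesis .
qed

lemma alpha_fin:
  assumes "finite S"
  shows "finite ({length xs | xs. is_cup S cup xs \<and> length xs \<ge> 2 \<and> last xs = p \<and>
        s (xs ! (length xs - 2)) p \<le> i} \<union> {1})"
proof -
  have "{length xs | xs. is_cup S cup xs \<and> length xs \<ge> 2 \<and> last xs = p \<and>
        s (xs ! (length xs - 2)) p \<le> i} \<subseteq> {..card S}"
    using cup_len_le[OF assms] by auto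
  then show ?thesis using finite_subset by blast
qed

lemma alpha_ge1: "finite S \<Longrightarrow> 1 \<le> alpha S cup s i p"
  unfolding alpha_def by (rule Max_ge[OF alpha_fin]) auto

lemma alpha_mem:
  assumes "finite S" "is_cup S cup xs" "length xs \<ge> 2" "last xs = p" "s (xs ! (length xs - 2)) p \<le> i"
  shows "length xs \<le> alpha S cup s i p"
  unfolding alpha_def by (rule Max_ge[OF alpha_fin[OF assms(1)]]) (use assms in blast)

lemma alpha_mono:
  assumes "finite S" "i \<le> j"
  shows "alpha S cup s i p \<le> alpha S cup s j p"
  unfolding alpha_def
  by (rule Max_mono) (use assms alpha_fin[OF assms(1)] in auto)

lemma alpha_cases:
  assumes "finite S"
  shows "alpha S cup s i p = 1 \<or> (\<exists>xs. is_cup S cup xs \<and> length xs \<ge> 2 \<and> last xs = p \<and>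
        s (xs ! (length xs - 2)) p \<le> i \<and> length xs = alpha S cup s i p)"
proof -
  have "alpha S cup s i p \<in> ({length xs | xs. is_cup S cup xs \<and> length xs \<ge> 2 \<and> last xs = p \<and>
        s (xs ! (length xs - 2)) p \<le> i} \<union> {1})"
    unfolding alpha_def by (rule Max_in[OF alpha_fin[OF assms]]) auto
  then show ?thesis by auto
qed

lemma cup_take: "is_cup S cup xs \<Longrightarrow> is_cup S cup (take n xs)"
  unfolding is_cup_def
  by (auto simp: sorted_wrt_take dest: in_set_takeD)

lemma cup_snoc:
  assumes "is_cup S cup xs" "length xs \<ge> 2" "last xs = x" "x < y" "y \<in> S"
    "cup (xs ! (length xs - 2)) x y"
  shows "is_cup S cup (xs @ [y])"
proof -
  have sw: "sorted_wrt (<) xs" "set xs \<subseteq> S" and c: "\<And>k. k + 2 < length xs \<Longrightarrow> cup (xs ! k) (xs ! (k+1)) (xs ! (k+2))"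
    using assms(1) unfolding is_cup_def by auto
  have lx: "xs ! (length xs - 1) = x" using assms(2,3) by (metis last_conv_nth list.size(3) not_numeral_le_zero)
  have "\<forall>z\<in>set xs. z < y"
  proof
    fix z assume "z \<in> set xs"
    then obtain k where k: "k < length xs" "xs ! k = z" by (auto simp: in_set_conv_nth)
    have "z \<le> x"
    proof (cases "k = length xs - 1")
      case True then show ?thesis using k lx by simp
    next
      case False then have "k < length xs - 1" using k by simp
      then have "xs ! k < xs ! (length xs - 1)" using sw(1) by (simp add: sorted_wrt_iff_nth_less)
      then show ?thesis using k lx by simp
    qed
    then show "z < y" using assms(4) by simp
  qed
  then have s1: "sorted_wrt (<) (xs @ [y])" using sw(1) by (simp add: sorted_wrt_append)
  have s2: "set (xs @ [y]) \<subseteq> S" using sw(2) assms(5) by simp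
  have s3: "cup ((xs@[y]) ! k) ((xs@[y]) ! (k+1)) ((xs@[y]) ! (k+2))" if "k + 2 < length (xs @ [y])" for k
  proof (cases "k + 2 < length xs")
    case True then show ?thesis using c[OF True] by (simp add: nth_append)
  next
    case False
    obtain m where m: "length xs = Suc (Suc m)" using assms(2)
      by (metis add_2_eq_Suc le_Suc_ex)
    have "k = m" using that False m by simp
    then show ?thesis using assms(6) lx m by (simp add: nth_append)
  qed
  show ?thesis unfolding is_cup_def using s1 s2 s3 by blast
qed

theorem theorem3p6:
  fixes S :: "'a::linorder set" and cup :: "'a \<Rightarrow> 'a \<Rightarrow> 'a \<Rightarrow> bool"
    and s :: "'a \<Rightarrow> 'a \<Rightarrow> nat" and a b :: nat
  assumes "finite S"
    and "cap_free S cup a" and "cup_free S cup b"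
    and "slope_labeling S cup a s"
  shows "(\<forall>p\<in>S. (\<forall>i. 1 \<le> i \<and> i \<le> a - 2 \<longrightarrow> 1 \<le> alpha S cup s i p \<and> alpha S cup s i p \<le> b - 1)
              \<and> (\<forall>i j. 1 \<le> i \<and> i \<le> j \<and> j \<le> a - 2 \<longrightarrow> alpha S cup s i p \<le> alpha S cup s j p))
       \<and> alpha_vec S cup s a ` S \<subseteq> T_set a b
       \<and> (\<forall>x\<in>S. \<forall>y\<in>S. \<forall>i. x < y \<and> s x y = i \<longrightarrow> alpha S cup s i x < alpha S cup s i y)
       \<and> inj_on (alpha_vec S cup s a) S"
proof -
  have ub: "alpha S cup s i p \<le> b - 1" if p: "p \<in> S" for i p
  proof -
    have b0: "b \<noteq> 0"
    proof
      assume "b = 0"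
      have "is_cup S cup []" by (simp add: is_cup_def)
      then show False using assms(3) \<open>b = 0\<close> unfolding cup_free_def by fastforce
    qed
    have b1: "b \<noteq> 1"
    proof
      assume "b = 1"
      have "is_cup S cup [p]" using p unfolding is_cup_def by simp
      then show False using assms(3) \<open>b = 1\<close> unfolding cup_free_def by fastforce
    qed
    have small: "length xs < b" if "is_cup S cup xs" for xs
    proof (rule ccontr)
      assume "\<not> length xs < b"
      then have "is_cup S cup (take b xs) \<and> length (take b xs) = b" using cup_take[OF that] by simp
      then show False using assms(3) unfolding cup_free_def by blast
    qed
    from alpha_cases[OF assms(1), of cup s i p] show ?thesis
      using b0 b1 small by fastforce
  qed
  have P1: "\<forall>p\<in>S. (\<forall>i. 1 \<le> i \<and> i \<le> a - 2 \<longrightarrow> 1 \<le> alpha S cup s i p \<and> alpha S cup s i p \<le> b - 1)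
              \<and> (\<forall>i j. 1 \<le> i \<and> i \<le> j \<and> j \<le> a - 2 \<longrightarrow> alpha S cup s i p \<le> alpha S cup s j p)"
    using ub alpha_ge1[OF assms(1)] alpha_mono[OF assms(1)] by blast
  have P2: "alpha_vec S cup s a ` S \<subseteq> T_set a b"
  proof
    fix v assume "v \<in> alpha_vec S cup s a ` S"
    then obtain p where p: "p \<in> S" "v = alpha_vec S cup s a p" by auto
    have "sorted v" unfolding p(2) alpha_vec_def
      by (auto simp: sorted_map intro!: alpha_mono[OF assms(1)] sorted_wrt_mono_rel[of _ "(\<le>)"] sorted_upt)
    moreover have "length v = a - 2" unfolding p(2) alpha_vec_def by simp
    moreover have "\<forall>x\<in>set v. 1 \<le> x \<and> x \<le> b - 1"
      unfolding p(2) alpha_vec_def using ub[OF p(1)] alpha_ge1[OF assms(1)] by auto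
    ultimately show "v \<in> T_set a b" unfolding T_set_def by simp
  qed
  have P3: "\<forall>x\<in>S. \<forall>y\<in>S. \<forall>i. x < y \<and> s x y = i \<longrightarrow> alpha S cup s i x < alpha S cup s i y"
  proof (intro ballI allI impI)
    fix x y i assume xy: "x \<in> S" "y \<in> S" "x < y \<and> s x y = i"
    from alpha_cases[OF assms(1), of cup s i x] show "alpha S cup s i x < alpha S cup s i y"
    proof
      assume a1: "alpha S cup s i x = 1"
      have "is_cup S cup [x, y]" using xy unfolding is_cup_def by simp
      then have "length [x,y] \<le> alpha S cup s i y"
        by (rule alpha_mem[OF assms(1)]) (use xy in auto)
      then show ?thesis using a1 by simp
    next
      assume "\<exists>xs. is_cup S cup xs \<and> length xs \<ge> 2 \<and> last xs = x \<and>
        s (xs ! (length xs - 2)) x \<le> i \<and> length xs = alpha S cup s i x"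
      then obtain xs where xs: "is_cup S cup xs" "length xs \<ge> 2" "last xs = x"
        "s (xs ! (length xs - 2)) x \<le> i" "length xs = alpha S cup s i x" by blast
      have wS: "xs ! (length xs - 2) \<in> S" using xs(1,2) unfolding is_cup_def by auto
      have lx: "xs ! (length xs - 1) = x" using xs(2,3) by (metis last_conv_nth list.size(3) not_numeral_le_zero)
      have "xs ! (length xs - 2) < xs ! (length xs - 1)"
        using xs(1,2) unfolding is_cup_def by (simp add: sorted_wrt_iff_nth_less)
      then have wx: "xs ! (length xs - 2) < x" using lx by simp
      have "cup (xs ! (length xs - 2)) x y"
        using assms(4) wS xy wx xs(4) unfolding slope_labeling_def by blast
      then have c: "is_cup S cup (xs @ [y])" using cup_snoc[OF xs(1,2,3)] xy by blast
      have "length (xs @ [y]) \<le> alpha S cup s i y"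
        by (rule alpha_mem[OF assms(1) c]) (use xs(2) xy lx in \<open>auto simp: nth_append\<close>)
      then show ?thesis using xs(5) by simp
    qed
  qed
  have P4: "inj_on (alpha_vec S cup s a) S"
  proof -
    have key: "alpha_vec S cup s a x \<noteq> alpha_vec S cup s a y" if "x \<in> S" "y \<in> S" "x < y" for x y
    proof
      assume eq: "alpha_vec S cup s a x = alpha_vec S cup s a y"
      let ?i = "s x y"
      have r: "1 \<le> ?i" "?i \<le> a - 2" using assms(4) that unfolding slope_labeling_def by auto
      have ix: "[1..<a - 1] ! (?i - 1) = ?i" using r by (subst nth_upt) auto
      have "alpha_vec S cup s a x ! (?i - 1) = alpha S cup s ?i x"
        using r ix unfolding alpha_vec_def by simp
      moreover have "alpha_vec S cup s a y ! (?i - 1) = alpha S cup s ?i y"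
        using r ix unfolding alpha_vec_def by simp
      ultimately show False using eq P3 that by fastforce
    qed
    show ?thesis unfolding inj_on_def
      by (metis key linorder_neqE)
  qed
  show ?thesis using P1 P2 P3 P4 by blast
qed

end
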